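(* For all $k\ge1$, $n\ge0$, $$b_k(n)=\sum_{\substack{n_1+\cdots+n_k=n\\ n_i\ge0}}\binom{2n}{2n_1\ 2n_2\ \cdots\ 2n_k}.$$
   Context: A labeled graph on a set $V$ of $k$ vertices with $n$ edges has $n$ directed edges labeled $1,\dots,n$, edge $i$ being an ordered pair of vertices in $V\times V$ (loops and multiple edges allowed). The degree of a vertex is the number of edges having it as initial or terminal point, a loop counted twice. The graph is balanced if every vertex has even degree; $b_k(n)$ is the number of balanced labeled graphs on $k$ (fixed, labeled) vertices with $n$ edges. $\binom{2n}{a_1\ \cdots\ a_k}$ denotes the multinomial coefficient. *)

theory Defs
  imports Main "HOL-Library.FuncSet"
begin

text \<open>Vertices are {0..<k}; edges are labeled 0..<n (standing for 1..n).
A labeled graph is an assignment of an ordered pair of vertices to each edge label.\<close>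

definition labeled_graphs :: "nat \<Rightarrow> nat \<Rightarrow> (nat \<Rightarrow> nat \<times> nat) set" where
  "labeled_graphs k n = {0..<n} \<rightarrow>\<^sub>E ({0..<k} \<times> {0..<k})"

text \<open>Degree: number of edges having v as initial point plus number having v as
terminal point (so a loop is counted twice).\<close>
definition degree :: "nat \<Rightarrow> (nat \<Rightarrow> nat \<times> nat) \<Rightarrow> nat \<Rightarrow> nat" where
  "degree n G v = card {i \<in> {0..<n}. fst (G i) = v} + card {i \<in> {0..<n}. snd (G i) = v}"

definition balanced :: "nat \<Rightarrow> nat \<Rightarrow> (nat \<Rightarrow> nat \<times> nat) \<Rightarrow> bool" where
  "balanced k n G \<longleftrightarrow> (\<forall>v \<in> {0..<k}. even (degree n G v))"

definition b :: "nat \<Rightarrow> nat \<Rightarrow> nat" where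
  "b k n = card {G \<in> labeled_graphs k n. balanced k n G}"

definition multinomial :: "nat \<Rightarrow> nat \<Rightarrow> (nat \<Rightarrow> nat) \<Rightarrow> nat" where
  "multinomial m k a = fact m div (\<Prod>i<k. fact (a i))"

definition compositions :: "nat \<Rightarrow> nat \<Rightarrow> (nat \<Rightarrow> nat) set" where
  "compositions k n = {c \<in> {0..<k} \<rightarrow>\<^sub>E {0..n}. (\<Sum>i<k. c i) = n}"

end

theory Submission imports Defs "HOL-Combinatorics.Multiset_Permutations" begin

definition enc :: "nat \<Rightarrow> (nat \<Rightarrow> nat \<times> nat) \<Rightarrow> nat list" where
  "enc n G = map (\<lambda>j. if even j then fst (G (j div 2)) else snd (G (j div 2))) [0..<2*n]"

definition dec :: "nat \<Rightarrow> nat list \<Rightarrow> (nat \<Rightarrow> nat \<times> nat)" where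
  "dec n xs = (\<lambda>i. if i < n then (xs!(2*i), xs!(2*i+1)) else undefined)"

lemma count_enc: "count (mset (enc n G)) v = degree n G v"
proof -
  let ?g = "\<lambda>j. if even j then fst (G (j div 2)) else snd (G (j div 2))"
  have "count (mset (enc n G)) v = card {j. j < 2*n \<and> v = ?g j}"
    unfolding enc_def count_mset count_list_eq_length_filter length_filter_conv_card
    by (rule arg_cong[where f=card]) auto
  also have "{j. j < 2*n \<and> v = ?g j} = (\<lambda>i. 2*i) ` {i \<in> {0..<n}. fst (G i) = v} \<union> (\<lambda>i. 2*i+1) ` {i \<in> {0..<n}. snd (G i) = v}"
  proof (rule set_eqI, rule iffI)
    fix j assume "j \<in> {j. j < 2*n \<and> v = ?g j}"
    then show "j \<in> (\<lambda>i. 2*i) ` {i \<in> {0..<n}. fst (G i) = v} \<union> (\<lambda>i. 2*i+1) ` {i \<in> {0..<n}. snd (G i) = v}"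
      by (cases "even j") (auto elim!: evenE oddE simp: image_iff)
  qed auto
  also have "card \<dots> = card {i \<in> {0..<n}. fst (G i) = v} + card {i \<in> {0..<n}. snd (G i) = v}"
    by (subst card_Un_disjoint) (auto simp: card_image inj_on_def; presburger)+
  finally show ?thesis by (simp add: degree_def)
qed

definition W :: "nat \<Rightarrow> nat \<Rightarrow> nat list set" where
  "W k n = {xs. length xs = 2*n \<and> set xs \<subseteq> {0..<k} \<and> (\<forall>v\<in>{0..<k}. even (count (mset xs) v))}"

lemma enc_dec: "length xs = 2*n \<Longrightarrow> enc n (dec n xs) = xs"
  unfolding enc_def dec_def
  by (rule nth_equalityI) (auto elim!: evenE oddE)

lemma dec_enc: "G \<in> labeled_graphs k n \<Longrightarrow> dec n (enc n G) = G"
  unfolding enc_def dec_def labeled_graphs_def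
  by (rule ext) (auto simp: PiE_def extensional_def)

lemma b_W: "b k n = card (W k n)"
proof -
  have "bij_betw (enc n) {G \<in> labeled_graphs k n. balanced k n G} (W k n)"
  proof (rule bij_betwI[where g="dec n"])
    show "enc n \<in> {G \<in> labeled_graphs k n. balanced k n G} \<rightarrow> W k n"
    proof
      fix G assume G: "G \<in> {G \<in> labeled_graphs k n. balanced k n G}"
      have "set (enc n G) \<subseteq> {0..<k}"
        using G unfolding enc_def labeled_graphs_def by (auto simp: PiE_def Pi_def mem_Times_iff)
      moreover have "length (enc n G) = 2*n" by (simp add: enc_def)
      ultimately show "enc n G \<in> W k n" using G
        unfolding W_def by (simp add: count_enc balanced_def)
    qed
    show "dec n \<in> W k n \<rightarrow> {G \<in> labeled_graphs k n. balanced k n G}"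
    proof
      fix xs assume xs: "xs \<in> W k n"
      have L: "dec n xs \<in> labeled_graphs k n"
      proof -
        have "xs ! j \<in> {0..<k}" if "j < 2*n" for j
          proof -
          have "length xs = 2*n" "set xs \<subseteq> {0..<k}" using xs unfolding W_def by auto
          then have "xs ! j \<in> set xs" using that by simp
          then show ?thesis using \<open>set xs \<subseteq> {0..<k}\<close> by blast
        qed
        then show ?thesis unfolding labeled_graphs_def dec_def
          by (auto simp: PiE_def extensional_def)
      qed
      moreover have "balanced k n (dec n xs)"
        using xs enc_dec[of xs n] count_enc[of n "dec n xs"]
        by (auto simp: W_def balanced_def)
      ultimately show "dec n xs \<in> {G \<in> labeled_graphs k n. balanced k n G}" by simp
    qed
  qed (auto simp: dec_enc enc_dec W_def)
  then show ?thesis unfolding b_def by (rule bij_betw_same_card)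
qed

definition M :: "nat \<Rightarrow> (nat \<Rightarrow> nat) \<Rightarrow> nat multiset" where
  "M k c = (\<Sum>i<k. replicate_mset (2 * c i) i)"

lemma count_M: "count (M k c) v = (if v < k then 2 * c v else 0)"
  by (simp add: M_def count_sum)

lemma set_M: "set_mset (M k c) \<subseteq> {0..<k}"
  by (auto simp: count_M simp flip: count_greater_zero_iff split: if_splits)

lemma size_M: "size (M k c) = (\<Sum>i<k. 2 * c i)"
  by (simp add: M_def)

lemma mset_decomp:
  fixes A :: "nat multiset"
  assumes "set_mset A \<subseteq> {0..<k}"
  shows "A = (\<Sum>i<k. replicate_mset (count A i) i)"
proof (rule multiset_eqI)
  fix v show "count A v = count (\<Sum>i<k. replicate_mset (count A i) i) v"
  proof (cases "v < k")
    case True then show ?thesis using sum.delta'[of "{..<k}" v "count A"] by (simp add: count_sum)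
  next
    case False
    then have "v \<notin># A" using assms by auto
    then show ?thesis using False by (simp add: count_sum not_in_iff)
  qed
qed

lemma W_Union: "W k n = (\<Union>c\<in>compositions k n. permutations_of_multiset (M k c))"
proof (rule set_eqI, rule iffI)
  fix xs assume xs: "xs \<in> W k n"
  then have len: "length xs = 2*n" and S: "set xs \<subseteq> {0..<k}"
    and ev: "\<forall>v\<in>{0..<k}. even (count (mset xs) v)" unfolding W_def by auto
  define c where "c = restrict (\<lambda>i. count (mset xs) i div 2) {0..<k}"
  have cnt: "count (mset xs) i = 2 * c i" if "i < k" for i
    using ev that by (auto simp: c_def)
  have dec: "mset xs = (\<Sum>i<k. replicate_mset (count (mset xs) i) i)"
    using S by (intro mset_decomp) simp
  have Mc: "mset xs = M k c"
    unfolding M_def by (subst dec) (rule sum.cong, auto simp: cnt)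
  have sumc: "(\<Sum>i<k. c i) = n"
  proof -
    have "2*n = size (M k c)" using Mc len by (metis size_mset)
    also have "\<dots> = 2 * (\<Sum>i<k. c i)" by (simp add: size_M sum_distrib_left)
    finally show ?thesis by simp
  qed
  have "c \<in> compositions k n"
  proof -
    have "c i \<le> n" if "i < k" for i
    proof -
      have "c i \<le> (\<Sum>i<k. c i)" using that by (intro member_le_sum) auto
      then show ?thesis using sumc by simp
    qed
    then show ?thesis using sumc unfolding compositions_def c_def
      by (auto simp: PiE_def extensional_def lessThan_atLeast0)
  qed
  then show "xs \<in> (\<Union>c\<in>compositions k n. permutations_of_multiset (M k c))"
    using Mc by (auto intro: permutations_of_multisetI)
next
  fix xs assume "xs \<in> (\<Union>c\<in>compositions k n. permutations_of_multiset (M k c))"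
  then obtain c where c: "c \<in> compositions k n" and Mc: "mset xs = M k c"
    by (auto dest: permutations_of_multisetD)
  have "length xs = 2*n"
  proof -
    have "length xs = size (M k c)" using Mc by (metis size_mset)
    also have "\<dots> = 2 * (\<Sum>i<k. c i)" by (simp add: size_M sum_distrib_left)
    finally show ?thesis using c by (simp add: compositions_def lessThan_atLeast0)
  qed
  moreover have "set xs \<subseteq> {0..<k}" using set_M[of k c] Mc by (metis set_mset_mset)
  moreover have "\<forall>v\<in>{0..<k}. even (count (mset xs) v)" using Mc by (simp add: count_M)
  ultimately show "xs \<in> W k n" by (simp add: W_def)
qed

lemma card_perm_M:
  assumes "c \<in> compositions k n"
  shows "card (permutations_of_multiset (M k c)) = multinomial (2 * n) k (\<lambda>i. 2 * c i)"
proof -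
  have sz: "size (M k c) = 2 * n"
    using assms by (simp add: size_M sum_distrib_left[symmetric] compositions_def lessThan_atLeast0)
  have "(\<Prod>x\<in>set_mset (M k c). fact (count (M k c) x)) = (\<Prod>i<k. fact (2 * c i) :: nat)"
  proof (rule prod.mono_neutral_cong_left)
    show "set_mset (M k c) \<subseteq> {..<k}" using set_M[of k c] by auto
  next
    show "\<forall>i\<in>{..<k} - set_mset (M k c). fact (2 * c i) = (1::nat)"
    proof
      fix i assume "i \<in> {..<k} - set_mset (M k c)"
      then have "count (M k c) i = 0" "i < k" by (auto simp flip: count_greater_zero_iff)
      then show "fact (2 * c i) = (1::nat)" by (simp add: count_M)
    qed
  qed (auto simp: count_M simp flip: count_greater_zero_iff split: if_splits)
  then show ?thesis
    by (simp add: card_permutations_of_multiset(1) sz multinomial_def)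
qed

theorem mainTheorem13:
  fixes k n :: nat
  assumes "k \<ge> 1"
  shows "b k n = (\<Sum>c \<in> compositions k n. multinomial (2 * n) k (\<lambda>i. 2 * c i))"
proof -
  have fin: "finite (compositions k n)"
    unfolding compositions_def by (rule finite_subset[of _ "{0..<k} \<rightarrow>\<^sub>E {0..n}"]) (auto intro: finite_PiE)
  have disj: "\<forall>c\<in>compositions k n. \<forall>d\<in>compositions k n. c \<noteq> d \<longrightarrow>
      permutations_of_multiset (M k c) \<inter> permutations_of_multiset (M k d) = {}"
  proof (intro ballI impI)
    fix c d assume c: "c \<in> compositions k n" and d: "d \<in> compositions k n" and ne: "c \<noteq> d"
    show "permutations_of_multiset (M k c) \<inter> permutations_of_multiset (M k d) = {}"
    proof (rule ccontr)
      assume "permutations_of_multiset (M k c) \<inter> permutations_of_multiset (M k d) \<noteq> {}"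
      then obtain xs where "xs \<in> permutations_of_multiset (M k c)" "xs \<in> permutations_of_multiset (M k d)"
        by blast
      then have "mset xs = M k c" "mset xs = M k d" by (auto dest: permutations_of_multisetD)
      then have eq: "M k c = M k d" by simp
      have "c i = d i" for i
      proof (cases "i < k")
        case True then show ?thesis using arg_cong[OF eq, of "\<lambda>A. count A i"] by (simp add: count_M)
      next
        case False then show ?thesis using c d
          by (auto simp: compositions_def PiE_def extensional_def)
      qed
      then show False using ne by auto
    qed
  qed
  have "b k n = card (W k n)" by (rule b_W)
  also have "\<dots> = (\<Sum>c\<in>compositions k n. card (permutations_of_multiset (M k c)))"
    unfolding W_Union by (rule card_UN_disjoint[OF fin]) (use disj in auto)
  also have "\<dots> = (\<Sum>c \<in> compositions k n. multinomial (2 * n) k (\<lambda>i. 2 * c i))"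
    by (rule sum.cong) (auto simp: card_perm_M)
  finally show ?thesis .
qed

end
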